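(* Under the disjoint $k$-cliques model with parameters $n,k,p,q$ (where $m=n/k$), every adaptive group testing scheme that exactly recovers the infection status vector $X=(X_1,\dots,X_n)$ from noiseless tests, using a (random) number $T$ of tests, satisfies $$\mathbb{E}[T]\ \ge\ m\cdot \mathbb{E}_Z\Big[(k-Z)\,\mathsf{h}_\mathsf{b}\big(1-(1-q)^Z\big)\Big],$$ where $Z\sim\mathsf{Binom}(k,p)$.
   Context: Stochastic block infection model $\mathsf{SBIM}(n,k,p,q_1,q_2)$: the vertex set $[n]$ is partitioned into $m=n/k$ known communities $\mathcal{C}_1,\dots,\mathcal{C}_m$, each of size $k$. Each vertex is independently a seed with probability $p\in(0,1]$. Then every seed $v$ independently infects each other vertex $u$ in its own community with probability $q_1$ and each vertex outside its community with probability $q_2$ (all transmission events mutually independent and independent of seed selection). $X_v=1$ iff $v$ is a seed or is infected by some seed. The disjoint $k$-cliques model is $\mathsf{SBIM}(n,k,p,q,0)$ with $q\in[0,1]$. Group testing: a test on a set $S\subseteq[n]$ returns $\bigvee_{i\in S}X_i$ (noiselessly); an adaptive scheme chooses each test based on previous outcomes, and must recover $X$ exactly (zero error). $\mathsf{h}_\mathsf{b}(x)=-x\log_2x-(1-x)\log_2(1-x)$ is the binary entropy function (bits). *)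

theory Defs
  imports "HOL-Probability.Probability"
begin

text \<open>Binary entropy in bits. Note: in Isabelle log 2 0 = 0, so 0 * log 2 0 = 0,
  matching the convention 0 log 0 = 0.\<close>
definition hb :: "real \<Rightarrow> real" where
  "hb x = - x * log 2 x - (1 - x) * log 2 (1 - x)"

text \<open>Vertices are 0..<n; community j is {j*k ..< (j+1)*k}, i.e. vertex v lies in
  community v div k. Infection status vectors are functions nat => bool that are
  False outside 0..<n.\<close>
definition SBIM :: "nat \<Rightarrow> nat \<Rightarrow> real \<Rightarrow> real \<Rightarrow> real \<Rightarrow> (nat \<Rightarrow> bool) pmf" where
  "SBIM n k p q1 q2 =
     bind_pmf (Pi_pmf {..<n} False (\<lambda>_. bernoulli_pmf p)) (\<lambda>s.
     bind_pmf (Pi_pmf {(v, u). v < n \<and> u < n \<and> v \<noteq> u} False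
                 (\<lambda>(v, u). bernoulli_pmf (if v div k = u div k then q1 else q2))) (\<lambda>e.
     return_pmf (\<lambda>u. u < n \<and> (s u \<or> (\<exists>v<n. v \<noteq> u \<and> s v \<and> e (v, u))))))"

text \<open>Deterministic adaptive group testing schemes as finite decision trees:
  Test S neg pos performs the test on S and continues with neg if the outcome is
  negative and with pos otherwise; Decide y outputs the estimate y.\<close>
datatype gt_scheme = Decide "nat \<Rightarrow> bool" | Test "nat set" gt_scheme gt_scheme

definition test_outcome :: "nat set \<Rightarrow> (nat \<Rightarrow> bool) \<Rightarrow> bool" where
  "test_outcome S x = (\<exists>i\<in>S. x i)"

fun gt_run :: "gt_scheme \<Rightarrow> (nat \<Rightarrow> bool) \<Rightarrow> (nat \<Rightarrow> bool)" where
  "gt_run (Decide y) x = y"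
| "gt_run (Test S neg pos) x = (if test_outcome S x then gt_run pos x else gt_run neg x)"

fun gt_num_tests :: "gt_scheme \<Rightarrow> (nat \<Rightarrow> bool) \<Rightarrow> nat" where
  "gt_num_tests (Decide y) x = 0"
| "gt_num_tests (Test S neg pos) x =
     Suc (if test_outcome S x then gt_num_tests pos x else gt_num_tests neg x)"

end

theory Submission
  imports Defs
begin



lemma kraft:
  "finite S \<Longrightarrow> inj_on (gt_run A) S \<Longrightarrow> (\<Sum>x\<in>S. (1/2::real)^(gt_num_tests A x)) \<le> 1"
proof (induction A arbitrary: S)
  case (Decide y)
  have "card S \<le> 1"
    using Decide.prems(2) unfolding inj_on_def by (simp add: card_le_Suc0_iff_eq Decide.prems(1))
  then show ?case by simp
next
  case (Test T neg pos)
  define S1 where "S1 = {x\<in>S. test_outcome T x}"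
  define S2 where "S2 = {x\<in>S. \<not> test_outcome T x}"
  have fin: "finite S1" "finite S2" using Test.prems(1) by (auto simp: S1_def S2_def)
  have SU: "S = S1 \<union> S2" "S1 \<inter> S2 = {}" by (auto simp: S1_def S2_def)
  have i1: "inj_on (gt_run pos) S1"
    using Test.prems(2) unfolding inj_on_def S1_def by auto
  have i2: "inj_on (gt_run neg) S2"
    using Test.prems(2) unfolding inj_on_def S2_def by auto
  have e1: "(\<Sum>x\<in>S1. (1/2::real)^(gt_num_tests (Test T neg pos) x)) = (1/2) * (\<Sum>x\<in>S1. (1/2::real)^(gt_num_tests pos x))"
    by (simp add: sum_distrib_left S1_def)
  have e2: "(\<Sum>x\<in>S2. (1/2::real)^(gt_num_tests (Test T neg pos) x)) = (1/2) * (\<Sum>x\<in>S2. (1/2::real)^(gt_num_tests neg x))"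
    by (simp add: sum_distrib_left S2_def)
  have "(\<Sum>x\<in>S. (1/2::real)^(gt_num_tests (Test T neg pos) x)) =
     (\<Sum>x\<in>S1. (1/2::real)^(gt_num_tests (Test T neg pos) x)) + (\<Sum>x\<in>S2. (1/2::real)^(gt_num_tests (Test T neg pos) x))"
    using SU fin by (simp add: sum.union_disjoint)
  also have "\<dots> \<le> 1/2 + 1/2"
    unfolding e1 e2 using Test.IH(1)[OF fin(2) i2] Test.IH(2)[OF fin(1) i1] by linarith
  finally show ?case by simp
qed

lemma term_bound:
  fixes P :: real and t :: nat
  assumes "0 < P"
  shows "P * (- log 2 P) - P * real t \<le> ((1/2)^t - P) / ln 2"
proof -
  define Q :: real where "Q = (1/2)^t"
  have Q: "0 < Q" by (simp add: Q_def)
  have "ln (Q/P) \<le> Q/P - 1" using Q assms by (intro ln_le_minus_one) simp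
  hence "P * ln (Q/P) / ln 2 \<le> P * (Q/P - 1) / ln 2"
    using assms by (intro divide_right_mono mult_left_mono) auto
  also have "P * (Q/P - 1) = Q - P" using assms by (simp add: field_simps)
  also have "ln (Q/P) = ln Q - ln P" using Q assms by (simp add: ln_div)
  also have "ln Q = - real t * ln 2" by (simp add: Q_def ln_realpow ln_div)
  finally show ?thesis unfolding Q_def[symmetric] log_def by (simp add: field_simps)
qed

lemma entropy_bound:
  assumes fin: "finite (set_pmf D)" and ok: "\<forall>x\<in>set_pmf D. gt_run A x = x"
  shows "measure_pmf.expectation D (\<lambda>x. - log 2 (pmf D x)) \<le> measure_pmf.expectation D (\<lambda>x. real (gt_num_tests A x))"
proof -
  let ?S = "set_pmf D"
  have a: "measure_pmf.expectation D (\<lambda>x. - log 2 (pmf D x)) = (\<Sum>x\<in>?S. pmf D x * (- log 2 (pmf D x)))"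
    by (subst integral_measure_pmf_real[OF fin]) (auto simp: mult.commute)
  have b: "measure_pmf.expectation D (\<lambda>x. real (gt_num_tests A x)) = (\<Sum>x\<in>?S. pmf D x * real (gt_num_tests A x))"
    by (subst integral_measure_pmf_real[OF fin]) (auto simp: mult.commute)
  have "(\<Sum>x\<in>?S. pmf D x * (- log 2 (pmf D x))) - (\<Sum>x\<in>?S. pmf D x * real (gt_num_tests A x))
       = (\<Sum>x\<in>?S. pmf D x * (- log 2 (pmf D x)) - pmf D x * real (gt_num_tests A x))"
    by (simp add: sum_subtractf)
  also have "\<dots> \<le> (\<Sum>x\<in>?S. ((1/2)^(gt_num_tests A x) - pmf D x) / ln 2)"
    by (intro sum_mono term_bound) (simp add: pmf_positive)
  also have "\<dots> = ((\<Sum>x\<in>?S. (1/2)^(gt_num_tests A x)) - (\<Sum>x\<in>?S. pmf D x)) / ln 2"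
    by (subst sum_divide_distrib[symmetric]) (simp add: sum_subtractf)
  also have "(\<Sum>x\<in>?S. pmf D x) = 1" using fin by (simp add: sum_pmf_eq_1)
  also have "(\<Sum>x\<in>?S. (1/2::real)^(gt_num_tests A x)) \<le> 1"
  proof (rule kraft[OF fin])
    show "inj_on (gt_run A) ?S" using ok by (auto simp: inj_on_def)
  qed
  hence "((\<Sum>x\<in>?S. (1/2::real)^(gt_num_tests A x)) - 1) / ln 2 \<le> 0"
    by (intro divide_nonpos_pos) auto
  finally show ?thesis unfolding a b by linarith
qed




lemma Pi_pmf_group:
  assumes finI: "finite I" and finJ: "\<And>i. i \<in> I \<Longrightarrow> finite (J i)"
  shows "Pi_pmf {(j,i). i\<in>I \<and> j\<in>J i} d P =
         map_pmf (\<lambda>G (j,i). if i\<in>I \<and> j\<in>J i then G i j else d)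
           (Pi_pmf I (\<lambda>_. d) (\<lambda>i. Pi_pmf (J i) d (\<lambda>j. P (j,i))))"
    (is "?L = map_pmf ?g ?M")
proof (rule pmf_eqI)
  fix f
  define K where "K = {(j,i). i\<in>I \<and> j\<in>J i}"
  have KS: "K = prod.swap ` Sigma I J" by (auto simp: K_def image_iff)
  have finS: "finite (Sigma I J)" using finI finJ by auto
  hence finK: "finite K" unfolding KS by simp
  show "pmf ?L f = pmf (map_pmf ?g ?M) f"
  proof (cases "\<forall>x. x \<notin> K \<longrightarrow> f x = d")
    case True
    define G where "G i = (if i\<in>I then (\<lambda>j. if j\<in>J i then f (j,i) else d) else (\<lambda>_. d))" for i
    have gG: "?g G = f"
    proof (rule ext, clarify)
      fix j i
      show "(if i\<in>I \<and> j\<in>J i then G i j else d) = f (j,i)"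
        using True[rule_format, of "(j,i)"] by (auto simp: G_def K_def)
    qed
    have "pmf (map_pmf ?g ?M) f = measure ?M (?g -` {f})" by (rule pmf_map)
    also have "\<dots> = measure ?M {G}"
    proof (rule measure_prob_cong_0)
      fix H assume H: "H \<in> ?g -` {f} - {G}"
      show "pmf ?M H = 0"
      proof (rule ccontr)
        assume "pmf ?M H \<noteq> 0"
        hence Hs: "H \<in> set_pmf ?M" by (simp add: set_pmf_eq)
        have o1: "H i = (\<lambda>_. d)" if "i \<notin> I" for i
          using subsetD[OF set_Pi_pmf_subset[OF finI] Hs] that by simp
        have o2: "H i j = d" if "i \<in> I" "j \<notin> J i" for i j
        proof -
          have "H i \<in> set_pmf (Pi_pmf (J i) d (\<lambda>j. P (j,i)))"
          proof -
            have "H \<in> PiE_dflt I (\<lambda>_. d) (set_pmf \<circ> (\<lambda>i. Pi_pmf (J i) d (\<lambda>j. P (j,i))))"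
              using subsetD[OF set_Pi_pmf_subset'[OF finI] Hs] .
            thus ?thesis using that(1) unfolding PiE_dflt_def by simp
          qed
          from subsetD[OF set_Pi_pmf_subset[OF finJ[OF that(1)]] this] show ?thesis using that(2) by simp
        qed
        have "?g H = f" using H by blast
        have "H = G"
        proof (rule ext)
          fix i show "H i = G i"
          proof (cases "i \<in> I")
            case False thus ?thesis using o1 by (simp add: G_def)
          next
            case True
            show ?thesis
            proof (rule ext)
              fix j
              show "H i j = G i j"
              proof (cases "j \<in> J i")
                case False thus ?thesis using o2 True by (simp add: G_def)
              next
                case jj: True
                have "?g H (j,i) = f (j,i)" using \<open>?g H = f\<close> by simp
                thus ?thesis using True jj by (simp add: G_def)
              qed
            qed
          qed
        qed
        thus False using H by auto
      qed
    next
      fix H assume "H \<in> {G} - ?g -` {f}" thus "pmf ?M H = 0" using gG by auto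
    qed
    also have "\<dots> = pmf ?M G" by (simp add: measure_pmf_single)
    also have "\<dots> = (\<Prod>i\<in>I. pmf (Pi_pmf (J i) d (\<lambda>j. P (j,i))) (G i))"
      using finI by (subst pmf_Pi) (auto simp: G_def)
    also have "\<dots> = (\<Prod>i\<in>I. \<Prod>j\<in>J i. pmf (P (j,i)) (f (j,i)))"
      using finJ by (intro prod.cong refl, subst pmf_Pi) (auto simp: G_def)
    also have "\<dots> = (\<Prod>(i,j)\<in>Sigma I J. pmf (P (j,i)) (f (j,i)))"
      using finI finJ by (subst prod.Sigma) auto
    also have "\<dots> = (\<Prod>x\<in>K. pmf (P x) (f x))"
      unfolding KS by (subst prod.reindex) (auto simp: case_prod_unfold prod.swap_def)
    also have "\<dots> = pmf ?L f"
      using finK True by (subst pmf_Pi) (auto simp: K_def)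
    finally show ?thesis ..
  next
    case False
    then obtain x where x: "x \<notin> K" "f x \<noteq> d" by blast
    have "pmf ?L f = 0" using x finK by (subst pmf_Pi) (auto simp: K_def)
    moreover have "?g -` {f} = {}"
    proof (rule ccontr)
      assume "?g -` {f} \<noteq> {}"
      then obtain H where "?g H = f" by blast
      moreover obtain j i where ji: "x = (j,i)" by (cases x)
      ultimately have "f x = d" using x(1) by (auto simp: K_def)
      thus False using x(2) by simp
    qed
    ultimately show ?thesis by (simp add: pmf_map)
  qed
qed




lemma bool_pmf_eqI:
  fixes M N :: "bool pmf"
  assumes "pmf M False = pmf N False"
  shows "M = N"
proof -
  have "sum (pmf M) UNIV = 1" "sum (pmf N) UNIV = 1" by (rule sum_pmf_eq_1; simp)+
  hence s: "pmf M True + pmf M False = 1" "pmf N True + pmf N False = 1"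
    by (simp_all add: UNIV_bool)
  show ?thesis
  proof (rule pmf_eqI)
    fix b show "pmf M b = pmf N b" using s assms by (cases b) auto
  qed
qed

lemma component_dist:
  assumes fin: "finite J" and a: "\<And>v. v \<in> J \<Longrightarrow> 0 \<le> a v \<and> a v \<le> 1"
  shows "map_pmf (\<lambda>h. c \<or> (\<exists>v\<in>J. t v \<and> h v)) (Pi_pmf J False (\<lambda>v. bernoulli_pmf (a v)))
       = bernoulli_pmf (if c then 1 else 1 - (\<Prod>v\<in>{v\<in>J. t v}. 1 - a v))"
proof (rule bool_pmf_eqI)
  let ?M = "Pi_pmf J False (\<lambda>v. bernoulli_pmf (a v))"
  have P01: "0 \<le> (\<Prod>v\<in>{v\<in>J. t v}. 1 - a v)" "(\<Prod>v\<in>{v\<in>J. t v}. 1 - a v) \<le> 1"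
    using a by (auto intro!: prod_nonneg prod_le_1)
  show "pmf (map_pmf (\<lambda>h. c \<or> (\<exists>v\<in>J. t v \<and> h v)) ?M) False =
        pmf (bernoulli_pmf (if c then 1 else 1 - (\<Prod>v\<in>{v\<in>J. t v}. 1 - a v))) False"
  proof (cases c)
    case True
    thus ?thesis by (simp add: pmf_map)
  next
    case False
    define B where "B v = (if t v then {False} else UNIV)" for v
    have "(\<lambda>h. c \<or> (\<exists>v\<in>J. t v \<and> h v)) -` {False} = Pi J B"
      using False by (auto simp: B_def Pi_def)
    hence "pmf (map_pmf (\<lambda>h. c \<or> (\<exists>v\<in>J. t v \<and> h v)) ?M) False = measure ?M (Pi J B)"
      by (simp add: pmf_map)
    also have "\<dots> = (\<Prod>v\<in>J. measure (bernoulli_pmf (a v)) (B v))"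
      using fin by (rule measure_Pi_pmf_Pi)
    also have "\<dots> = (\<Prod>v\<in>J. if t v then 1 - a v else 1)"
      using a by (intro prod.cong refl) (auto simp: B_def measure_pmf_single)
    also have "\<dots> = (\<Prod>v\<in>{v\<in>J. t v}. 1 - a v)"
      using fin by (simp add: prod.inter_filter)
    finally show ?thesis using False P01 by simp
  qed
qed




lemma entropy_Pi_bern:
  assumes fin: "finite A" and r: "\<And>u. u \<in> A \<Longrightarrow> 0 \<le> r u \<and> r u \<le> 1"
  defines "D \<equiv> Pi_pmf A False (\<lambda>u. bernoulli_pmf (r u))"
  shows "measure_pmf.expectation D (\<lambda>x. - log 2 (pmf D x)) = (\<Sum>u\<in>A. hb (r u))"
proof -
  define g where "g u b = - log 2 (pmf (bernoulli_pmf (r u)) b)" for u b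
  have finD: "finite (set_pmf D)"
    unfolding D_def using fin by (simp add: set_Pi_pmf finite_PiE_dflt)
  have "measure_pmf.expectation D (\<lambda>x. - log 2 (pmf D x)) =
        measure_pmf.expectation D (\<lambda>x. \<Sum>u\<in>A. g u (x u))"
  proof (rule integral_cong_AE)
    show "AE x in measure_pmf D. - log 2 (pmf D x) = (\<Sum>u\<in>A. g u (x u))"
    proof (rule AE_pmfI)
      fix x assume x: "x \<in> set_pmf D"
      hence x': "x \<in> PiE_dflt A False (set_pmf \<circ> (\<lambda>u. bernoulli_pmf (r u)))"
        unfolding D_def using fin by (simp add: set_Pi_pmf)
      have pD: "pmf D x = (\<Prod>u\<in>A. pmf (bernoulli_pmf (r u)) (x u))"
        unfolding D_def using fin x' by (subst pmf_Pi) (auto simp: PiE_dflt_def)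
      have pos: "pmf (bernoulli_pmf (r u)) (x u) \<noteq> 0" if "u \<in> A" for u
        using x' that by (auto simp: PiE_dflt_def set_pmf_eq)
      have "ln (pmf D x) = (\<Sum>u\<in>A. ln (pmf (bernoulli_pmf (r u)) (x u)))"
        unfolding pD using fin pos by (rule ln_prod)
      thus "- log 2 (pmf D x) = (\<Sum>u\<in>A. g u (x u))"
        unfolding g_def log_def by (simp add: sum_divide_distrib sum_negf)
    qed
  qed auto
  also have "\<dots> = (\<Sum>u\<in>A. measure_pmf.expectation D (\<lambda>x. g u (x u)))"
    by (rule Bochner_Integration.integral_sum) (simp add: integrable_measure_pmf_finite[OF finD])
  also have "\<dots> = (\<Sum>u\<in>A. hb (r u))"
  proof (rule sum.cong[OF refl])
    fix u assume u: "u \<in> A"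
    have "measure_pmf.expectation D (\<lambda>x. g u (x u)) =
          measure_pmf.expectation (map_pmf (\<lambda>x. x u) D) (g u)" by simp
    also have "map_pmf (\<lambda>x. x u) D = bernoulli_pmf (r u)"
      unfolding D_def using fin u by (subst Pi_pmf_component) auto
    also have "measure_pmf.expectation (bernoulli_pmf (r u)) (g u) = hb (r u)"
      using r[OF u] by (simp add: g_def hb_def)
    finally show "measure_pmf.expectation D (\<lambda>x. g u (x u)) = hb (r u)" .
  qed
  finally show ?thesis .
qed




lemma Ds_eq:
  fixes n k :: nat and q :: real and s :: "nat \<Rightarrow> bool"
  assumes q: "0 \<le> q" "q \<le> 1"
  shows "bind_pmf (Pi_pmf {(v, u). v < n \<and> u < n \<and> v \<noteq> u} False
                 (\<lambda>(v, u). bernoulli_pmf (if v div k = u div k then q else 0)))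
            (\<lambda>e. return_pmf (\<lambda>u. u < n \<and> (s u \<or> (\<exists>v<n. v \<noteq> u \<and> s v \<and> e (v, u)))))
     = Pi_pmf {..<n} False (\<lambda>u. bernoulli_pmf (if s u then 1 else
          1 - (1-q)^card {v. v<n \<and> v\<noteq>u \<and> s v \<and> v div k = u div k}))"
proof -
  define J where "J u = {v. v<n \<and> v\<noteq>u}" for u :: nat
  define a where "a u v = (if v div k = u div k then q else 0)" for u v :: nat
  define \<phi> where "\<phi> u h = (s u \<or> (\<exists>v\<in>J u. s v \<and> h v))" for u and h :: "nat \<Rightarrow> bool"
  define g where "g = (\<lambda>G (j,i). if i\<in>{..<n} \<and> j\<in>J i then G i j else False)"
  define M where "M = Pi_pmf {..<n} (\<lambda>_. False) (\<lambda>i. Pi_pmf (J i) False (\<lambda>j. bernoulli_pmf (a i j)))"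
  have finJ: "finite (J u)" for u by (simp add: J_def)
  have E: "{(v,u). v<n \<and> u<n \<and> v\<noteq>u} = {(j,i). i\<in>{..<n} \<and> j\<in>J i}" by (auto simp: J_def)
  have P: "(\<lambda>(v, u). bernoulli_pmf (if v div k = u div k then q else 0)) = (\<lambda>(j,i). bernoulli_pmf (a i j))"
    by (auto simp: a_def fun_eq_iff)
  have "Pi_pmf {(v, u). v < n \<and> u < n \<and> v \<noteq> u} False
                 (\<lambda>(v, u). bernoulli_pmf (if v div k = u div k then q else 0)) = map_pmf g M"
    unfolding E P g_def M_def by (subst Pi_pmf_group) (auto simp: finJ)
  hence "bind_pmf (Pi_pmf {(v, u). v < n \<and> u < n \<and> v \<noteq> u} False
                 (\<lambda>(v, u). bernoulli_pmf (if v div k = u div k then q else 0)))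
            (\<lambda>e. return_pmf (\<lambda>u. u < n \<and> (s u \<or> (\<exists>v<n. v \<noteq> u \<and> s v \<and> e (v, u)))))
      = bind_pmf M (\<lambda>G. return_pmf (\<lambda>u. u < n \<and> (s u \<or> (\<exists>v<n. v \<noteq> u \<and> s v \<and> g G (v, u)))))"
    by (simp add: bind_map_pmf)
  also have "(\<lambda>G. return_pmf (\<lambda>u. u < n \<and> (s u \<or> (\<exists>v<n. v \<noteq> u \<and> s v \<and> g G (v, u)))))
      = (\<lambda>G. Pi_pmf {..<n} False (\<lambda>u. return_pmf (\<phi> u (G u))))"
  proof (rule ext)
    fix G
    have "(\<lambda>u. u < n \<and> (s u \<or> (\<exists>v<n. v \<noteq> u \<and> s v \<and> g G (v, u)))) =
          (\<lambda>u. if u \<in> {..<n} then \<phi> u (G u) else False)"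
      by (auto simp: g_def \<phi>_def J_def fun_eq_iff)
    thus "return_pmf (\<lambda>u. u < n \<and> (s u \<or> (\<exists>v<n. v \<noteq> u \<and> s v \<and> g G (v, u)))) =
          Pi_pmf {..<n} False (\<lambda>u. return_pmf (\<phi> u (G u)))"
      by simp
  qed
  also have "bind_pmf M (\<lambda>G. Pi_pmf {..<n} False (\<lambda>u. return_pmf (\<phi> u (G u))))
      = Pi_pmf {..<n} False (\<lambda>u. bind_pmf (Pi_pmf (J u) False (\<lambda>j. bernoulli_pmf (a u j))) (\<lambda>h. return_pmf (\<phi> u h)))"
    unfolding M_def by (rule Pi_pmf_bind[symmetric]) simp
  also have "\<dots> = Pi_pmf {..<n} False (\<lambda>u. bernoulli_pmf (if s u then 1 else
          1 - (1-q)^card {v. v<n \<and> v\<noteq>u \<and> s v \<and> v div k = u div k}))"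
  proof (rule Pi_pmf_cong[OF refl refl])
    fix u assume u: "u \<in> {..<n}"
    have "bind_pmf (Pi_pmf (J u) False (\<lambda>j. bernoulli_pmf (a u j))) (\<lambda>h. return_pmf (\<phi> u h))
        = map_pmf (\<lambda>h. s u \<or> (\<exists>v\<in>J u. s v \<and> h v)) (Pi_pmf (J u) False (\<lambda>j. bernoulli_pmf (a u j)))"
      by (simp add: map_pmf_def \<phi>_def)
    also have "\<dots> = bernoulli_pmf (if s u then 1 else 1 - (\<Prod>v\<in>{v\<in>J u. s v}. 1 - a u v))"
      using q by (intro component_dist finJ) (auto simp: a_def)
    also have "(\<Prod>v\<in>{v\<in>J u. s v}. 1 - a u v) = (\<Prod>v\<in>{v\<in>J u. s v}. if v div k = u div k then 1 - q else 1)"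
      by (intro prod.cong refl) (auto simp: a_def)
    also have "\<dots> = (\<Prod>v\<in>{v\<in>{v\<in>J u. s v}. v div k = u div k}. 1 - q)"
      by (subst prod.inter_filter) (auto simp: finJ)
    also have "\<dots> = (1-q)^card {v. v<n \<and> v\<noteq>u \<and> s v \<and> v div k = u div k}"
    proof -
      have "{v\<in>{v\<in>J u. s v}. v div k = u div k} = {v. v<n \<and> v\<noteq>u \<and> s v \<and> v div k = u div k}"
        by (auto simp: J_def)
      thus ?thesis by simp
    qed
    finally show "bind_pmf (Pi_pmf (J u) False (\<lambda>j. bernoulli_pmf (a u j))) (\<lambda>h. return_pmf (\<phi> u h)) =
      bernoulli_pmf (if s u then 1 else 1 - (1-q)^card {v. v<n \<and> v\<noteq>u \<and> s v \<and> v div k = u div k})" .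
  qed
  finally show ?thesis .
qed




lemma divk: "0 < (k::nat) \<Longrightarrow> (v div k = j) = (j*k \<le> v \<and> v < j*k+k)"
  by (metis add_diff_inverse_nat diff_add_inverse2 div_less_iff_less_mult
    div_times_less_eq_dividend le_less_Suc_eq less_eq_div_iff_mult_less_eq
    mult_Suc not_add_less2)

lemma hb_1[simp]: "hb 1 = 0" by (simp add: hb_def)

lemma card_not: "finite C \<Longrightarrow> card {u\<in>C. \<not> s u} = card C - card {u\<in>C. s u}"
proof -
  assume f: "finite C"
  have "C = {u\<in>C. \<not> s u} \<union> {u\<in>C. s u}" by auto
  hence "card C = card {u\<in>C. \<not> s u} + card {u\<in>C. s u}"
    using f by (metis (no_types, lifting) card_Un_disjoint disjoint_iff finite_Un mem_Collect_eq)
  thus ?thesis by simp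
qed

lemma group_sum:
  fixes k m :: nat and s :: "nat \<Rightarrow> bool" and q :: real
  assumes k: "0 < k"
  shows "(\<Sum>u<m*k. hb (if s u then 1 else 1 - (1-q)^card {v. v<m*k \<and> v\<noteq>u \<and> s v \<and> v div k = u div k}))
       = (\<Sum>j<m. real (k - card {v\<in>{j*k..<j*k+k}. s v}) * hb (1 - (1-q)^card {v\<in>{j*k..<j*k+k}. s v}))"
proof -
  let ?f = "\<lambda>u. hb (if s u then 1 else 1 - (1-q)^card {v. v<m*k \<and> v\<noteq>u \<and> s v \<and> v div k = u div k})"
  have "(\<Sum>u<m*k. ?f u) = (\<Sum>j<m. \<Sum>u\<in>{j*k..<j*k+k}. ?f u)"
    by (rule sum.nat_group[symmetric])
  also have "\<dots> = (\<Sum>j<m. real (k - card {v\<in>{j*k..<j*k+k}. s v}) * hb (1 - (1-q)^card {v\<in>{j*k..<j*k+k}. s v}))"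
  proof (rule sum.cong[OF refl])
    fix j assume j: "j \<in> {..<m}"
    define C where "C = {j*k..<j*k+k}"
    define Z where "Z = card {v\<in>C. s v}"
    have inner: "?f u = (if s u then 0 else hb (1 - (1-q)^Z))" if u: "u \<in> C" for u
    proof (cases "s u")
      case False
      have ud: "u div k = j" using u k by (simp add: divk C_def)
      have "{v. v<m*k \<and> v\<noteq>u \<and> s v \<and> v div k = u div k} = {v\<in>C. s v}"
      proof (intro set_eqI iffI)
        fix v assume "v \<in> {v. v<m*k \<and> v\<noteq>u \<and> s v \<and> v div k = u div k}"
        thus "v \<in> {v\<in>C. s v}" using ud k by (auto simp: divk C_def)
      next
        fix v assume v: "v \<in> {v\<in>C. s v}"
        have "j*k+k \<le> m*k" using j by (metis Suc_leI lessThan_iff mult_Suc mult_le_mono1 add.commute)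
        moreover have "v div k = j" using v k by (simp add: divk C_def)
        ultimately show "v \<in> {v. v<m*k \<and> v\<noteq>u \<and> s v \<and> v div k = u div k}"
          using v ud False by (auto simp: C_def)
      qed
      thus ?thesis using False by (simp add: Z_def)
    qed simp
    have "(\<Sum>u\<in>C. ?f u) = (\<Sum>u\<in>C. if s u then 0 else hb (1 - (1-q)^Z))"
      by (intro sum.cong refl inner)
    also have "\<dots> = (\<Sum>u\<in>{u\<in>C. \<not> s u}. hb (1 - (1-q)^Z))"
      by (subst sum.inter_filter) (auto simp: C_def intro!: sum.cong)
    also have "\<dots> = real (card {u\<in>C. \<not> s u}) * hb (1 - (1-q)^Z)" by simp
    also have "card {u\<in>C. \<not> s u} = k - Z" unfolding Z_def by (subst card_not) (auto simp: C_def)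
    finally show "(\<Sum>u\<in>{j*k..<j*k+k}. ?f u) = real (k - card {v\<in>{j*k..<j*k+k}. s v}) * hb (1 - (1-q)^card {v\<in>{j*k..<j*k+k}. s v})"
      by (simp add: C_def Z_def)
  qed
  finally show ?thesis .
qed




lemma exp_bind_fin:
  fixes f :: "'b \<Rightarrow> real"
  assumes fM: "finite (set_pmf M)" and fN: "\<And>x. x \<in> set_pmf M \<Longrightarrow> finite (set_pmf (N x))"
  shows "measure_pmf.expectation (bind_pmf M N) f = measure_pmf.expectation M (\<lambda>x. measure_pmf.expectation (N x) f)"
proof -
  define B where "B = (\<Union>x\<in>set_pmf M. set_pmf (N x))"
  have fB: "finite B" using fM fN by (simp add: B_def)
  have "measure_pmf.expectation (bind_pmf M N) f = (\<Sum>y\<in>B. f y * pmf (bind_pmf M N) y)"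
    by (rule integral_measure_pmf_real[OF fB]) (auto simp: B_def)
  also have "\<dots> = (\<Sum>y\<in>B. f y * (\<Sum>x\<in>set_pmf M. pmf (N x) y * pmf M x))"
    by (intro sum.cong refl, subst pmf_bind, subst integral_measure_pmf_real[OF fM]) auto
  also have "\<dots> = (\<Sum>x\<in>set_pmf M. (\<Sum>y\<in>B. f y * pmf (N x) y) * pmf M x)"
    by (simp add: sum_distrib_left sum_distrib_right mult_ac sum.swap[of _ B])
  also have "\<dots> = (\<Sum>x\<in>set_pmf M. measure_pmf.expectation (N x) f * pmf M x)"
    by (intro sum.cong refl, subst integral_measure_pmf_real[OF fB]) (auto simp: B_def)
  also have "\<dots> = measure_pmf.expectation M (\<lambda>x. measure_pmf.expectation (N x) f)"
    by (rule integral_measure_pmf_real[OF fM, symmetric]) auto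
  finally show ?thesis .
qed

theorem lemma3:
  fixes n k :: nat and p q :: real and A :: gt_scheme
  assumes "0 < k" and "k dvd n" and "0 < p" and "p \<le> 1" and "0 \<le> q" and "q \<le> 1"
    and "\<forall>x\<in>set_pmf (SBIM n k p q 0). gt_run A x = x"
  shows "measure_pmf.expectation (SBIM n k p q 0) (\<lambda>x. real (gt_num_tests A x))
           \<ge> real (n div k) * measure_pmf.expectation (binomial_pmf k p)
                 (\<lambda>z. real (k - z) * hb (1 - (1 - q) ^ z))"
proof -
  note k = assms(1) and q = assms(5,6) and ok = assms(7)
  have p: "0 \<le> p" "p \<le> 1" using assms(3,4) by auto
  obtain m where nm: "n = m * k" using assms(2) by (auto simp: dvd_def mult.commute)
  have mdiv: "n div k = m" using nm k by simp
  define S where "S = Pi_pmf {..<n} False (\<lambda>_. bernoulli_pmf p)"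
  define Dd where "Dd s = bind_pmf (Pi_pmf {(v, u). v < n \<and> u < n \<and> v \<noteq> u} False
                 (\<lambda>(v, u). bernoulli_pmf (if v div k = u div k then q else 0)))
            (\<lambda>e. return_pmf (\<lambda>u. u < n \<and> (s u \<or> (\<exists>v<n. v \<noteq> u \<and> s v \<and> e (v, u)))))" for s
  define r where "r s u = (if s u then 1 else
          1 - (1-q)^card {v. v<n \<and> v\<noteq>u \<and> s v \<and> v div k = u div k})" for s u
  define g where "g z = real (k - z) * hb (1 - (1 - q) ^ z)" for z
  define C where "C j = {j*k..<j*k+k}" for j
  have SB: "SBIM n k p q 0 = bind_pmf S Dd" unfolding SBIM_def S_def Dd_def by simp
  have DdE: "Dd s = Pi_pmf {..<n} False (\<lambda>u. bernoulli_pmf (r s u))" for s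
    unfolding Dd_def r_def by (rule Ds_eq[OF q])
  have r01: "0 \<le> r s u \<and> r s u \<le> 1" for s u
    using q by (auto simp: r_def power_le_one)
  have finS: "finite (set_pmf S)" unfolding S_def by (simp add: set_Pi_pmf finite_PiE_dflt)
  have finD: "finite (set_pmf (Dd s))" for s unfolding DdE by (simp add: set_Pi_pmf finite_PiE_dflt)
  have step1: "measure_pmf.expectation (SBIM n k p q 0) (\<lambda>x. real (gt_num_tests A x)) =
      measure_pmf.expectation S (\<lambda>s. measure_pmf.expectation (Dd s) (\<lambda>x. real (gt_num_tests A x)))"
    unfolding SB by (rule exp_bind_fin[OF finS finD])
  have step2: "(\<Sum>u<n. hb (r s u)) \<le> measure_pmf.expectation (Dd s) (\<lambda>x. real (gt_num_tests A x))"
    if s: "s \<in> set_pmf S" for s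
  proof -
    have "(\<Sum>u<n. hb (r s u)) = measure_pmf.expectation (Dd s) (\<lambda>x. - log 2 (pmf (Dd s) x))"
      unfolding DdE by (rule entropy_Pi_bern[symmetric]) (auto simp: r01)
    also have "\<dots> \<le> measure_pmf.expectation (Dd s) (\<lambda>x. real (gt_num_tests A x))"
    proof (rule entropy_bound[OF finD])
      show "\<forall>x\<in>set_pmf (Dd s). gt_run A x = x" using ok s unfolding SB by auto
    qed
    finally show ?thesis .
  qed
  have step3: "measure_pmf.expectation S (\<lambda>s. \<Sum>u<n. hb (r s u)) \<le>
      measure_pmf.expectation S (\<lambda>s. measure_pmf.expectation (Dd s) (\<lambda>x. real (gt_num_tests A x)))"
    by (intro integral_mono_AE integrable_measure_pmf_finite[OF finS] AE_pmfI step2)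
  have step4: "(\<Sum>u<n. hb (r s u)) = (\<Sum>j<m. g (card {v\<in>C j. s v}))" for s
    unfolding r_def g_def C_def nm by (rule group_sum[OF k])
  have binom: "map_pmf (\<lambda>s. card {v\<in>C j. s v}) S = binomial_pmf k p" if j: "j < m" for j
  proof -
    have sub: "C j \<subseteq> {..<n}"
    proof -
      have "j*k+k \<le> m*k" using j by (metis Suc_leI mult_Suc mult_le_mono1 add.commute)
      thus ?thesis by (auto simp: C_def nm)
    qed
    have "binomial_pmf k p = map_pmf (\<lambda>f. card {x\<in>C j. f x}) (Pi_pmf (C j) False (\<lambda>_. bernoulli_pmf p))"
      using p by (intro binomial_pmf_altdef') (auto simp: C_def)
    also have "Pi_pmf (C j) False (\<lambda>_. bernoulli_pmf p) =
        map_pmf (\<lambda>f x. if x \<in> C j then f x else False) S"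
      unfolding S_def by (rule Pi_pmf_subset[OF _ sub]) simp
    also have "map_pmf (\<lambda>f. card {x\<in>C j. f x}) \<dots> = map_pmf (\<lambda>s. card {v\<in>C j. s v}) S"
      unfolding pmf.map_comp o_def by (intro map_pmf_cong refl arg_cong[where f=card]) auto
    finally show ?thesis by simp
  qed
  have step5: "measure_pmf.expectation S (\<lambda>s. \<Sum>j<m. g (card {v\<in>C j. s v})) =
       real m * measure_pmf.expectation (binomial_pmf k p) g"
  proof -
    have "measure_pmf.expectation S (\<lambda>s. \<Sum>j<m. g (card {v\<in>C j. s v})) =
        (\<Sum>j<m. measure_pmf.expectation S (\<lambda>s. g (card {v\<in>C j. s v})))"
      by (rule Bochner_Integration.integral_sum) (simp add: integrable_measure_pmf_finite[OF finS])
    also have "\<dots> = (\<Sum>j<m. measure_pmf.expectation (binomial_pmf k p) g)"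
    proof (rule sum.cong[OF refl])
      fix j assume "j \<in> {..<m}"
      hence "map_pmf (\<lambda>s. card {v\<in>C j. s v}) S = binomial_pmf k p" using binom by simp
      hence "measure_pmf.expectation (binomial_pmf k p) g = measure_pmf.expectation (map_pmf (\<lambda>s. card {v\<in>C j. s v}) S) g"
        by simp
      thus "measure_pmf.expectation S (\<lambda>s. g (card {v\<in>C j. s v})) = measure_pmf.expectation (binomial_pmf k p) g"
        by simp
    qed
    also have "\<dots> = real m * measure_pmf.expectation (binomial_pmf k p) g" by simp
    finally show ?thesis .
  qed
  show ?thesis
    unfolding step1 mdiv g_def[symmetric]
    using step3 step4 step5 by simp
qed


end
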